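(* Let $C$ be a small category and let $\xi_*:X\to Y$ be a morphism of $\Delta/C$ such that $\xi:[q_X]\to[q_Y]$ is surjective. Then its class $[\xi_*]:X\to Y$ is an isomorphism in $[\Delta/C]$.
   Context: For $q\ge0$, $[q]=\{0<\dots<q\}$ viewed as a category. A $q$-simplex of the nerve $NC$ is a functor $X:[q]\to C$; write $q_X=q$. The category $\Delta/C$ has as objects all simplices of $NC$ (all dimensions) and as morphisms $X\to Y$ the order-preserving maps $\xi:[q_X]\to[q_Y]$ with $Y\circ\xi=X$, written $\xi_*$. Given a $q$-simplex $X$ and a surjective order-preserving $s:[q+1]\to[q]$, let $d,d':[q]\to[q+1]$ be the two order-preserving right inverses of $s$; the morphisms $d_*,d'_*:X\to X\circ s$ are called elementary equivalent. $\sim$ is the smallest equivalence relation on morphisms of $\Delta/C$ (between the same source and target) that is compatible with composition and contains all elementary equivalent pairs; $[\Delta/C]$ is the quotient category with the same objects and morphisms the $\sim$-classes $[\xi_*]$. *)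

theory Defs
  imports Main
begin

record ('o, 'm) cat =
  Ob   :: "'o set"
  Ar   :: "'m set"
  Dom  :: "'m \<Rightarrow> 'o"
  Cod  :: "'m \<Rightarrow> 'o"
  Idm  :: "'o \<Rightarrow> 'm"
  Comp :: "'m \<Rightarrow> 'm \<Rightarrow> 'm"   (* Comp g f = g o f *)

definition category :: "('o, 'm) cat \<Rightarrow> bool" where
  "category C \<longleftrightarrow>
     (\<forall>f\<in>Ar C. Dom C f \<in> Ob C \<and> Cod C f \<in> Ob C) \<and>
     (\<forall>a\<in>Ob C. Idm C a \<in> Ar C \<and> Dom C (Idm C a) = a \<and> Cod C (Idm C a) = a) \<and>
     (\<forall>f\<in>Ar C. \<forall>g\<in>Ar C. Cod C f = Dom C g \<longrightarrow>
        Comp C g f \<in> Ar C \<and> Dom C (Comp C g f) = Dom C f \<and> Cod C (Comp C g f) = Cod C g) \<and>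
     (\<forall>f\<in>Ar C. Comp C f (Idm C (Dom C f)) = f \<and> Comp C (Idm C (Cod C f)) f = f) \<and>
     (\<forall>f\<in>Ar C. \<forall>g\<in>Ar C. \<forall>h\<in>Ar C. Cod C f = Dom C g \<longrightarrow> Cod C g = Dom C h \<longrightarrow>
        Comp C h (Comp C g f) = Comp C (Comp C h g) f)"

text \<open>A q-simplex is stored as its dimension, its object map on {0..q} and its
  morphism map on pairs i \<le> j \<le> q (the image of i \<le> j), extended by undefined elsewhere
  so that HOL equality is equality of functors.\<close>

record ('o, 'm) simplex =
  dim :: nat
  sob :: "nat \<Rightarrow> 'o"
  sar :: "nat \<Rightarrow> nat \<Rightarrow> 'm"

definition is_simplex :: "('o, 'm) cat \<Rightarrow> ('o, 'm) simplex \<Rightarrow> bool" where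
  "is_simplex C X \<longleftrightarrow>
     (\<forall>i\<le>dim X. sob X i \<in> Ob C) \<and>
     (\<forall>i j. i \<le> j \<and> j \<le> dim X \<longrightarrow>
        sar X i j \<in> Ar C \<and> Dom C (sar X i j) = sob X i \<and> Cod C (sar X i j) = sob X j) \<and>
     (\<forall>i\<le>dim X. sar X i i = Idm C (sob X i)) \<and>
     (\<forall>i j k. i \<le> j \<and> j \<le> k \<and> k \<le> dim X \<longrightarrow> sar X i k = Comp C (sar X j k) (sar X i j)) \<and>
     (\<forall>i. dim X < i \<longrightarrow> sob X i = undefined) \<and>
     (\<forall>i j. \<not> (i \<le> j \<and> j \<le> dim X) \<longrightarrow> sar X i j = undefined)"

definition opmap :: "(nat \<Rightarrow> nat) \<Rightarrow> nat \<Rightarrow> nat \<Rightarrow> bool" where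
  "opmap \<xi> p q \<longleftrightarrow>
     (\<forall>i\<le>p. \<xi> i \<le> q) \<and> (\<forall>i j. i \<le> j \<and> j \<le> p \<longrightarrow> \<xi> i \<le> \<xi> j) \<and>
     (\<forall>i. p < i \<longrightarrow> \<xi> i = undefined)"

definition precomp :: "('o, 'm) simplex \<Rightarrow> (nat \<Rightarrow> nat) \<Rightarrow> nat \<Rightarrow> ('o, 'm) simplex" where
  "precomp Y \<xi> p =
     \<lparr> dim = p,
       sob = (\<lambda>i. if i \<le> p then sob Y (\<xi> i) else undefined),
       sar = (\<lambda>i j. if i \<le> j \<and> j \<le> p then sar Y (\<xi> i) (\<xi> j) else undefined) \<rparr>"

type_synonym ('o, 'm) dmor = "('o, 'm) simplex \<times> (nat \<Rightarrow> nat) \<times> ('o, 'm) simplex"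

definition src :: "('o, 'm) dmor \<Rightarrow> ('o, 'm) simplex" where "src f = fst f"
definition tgt :: "('o, 'm) dmor \<Rightarrow> ('o, 'm) simplex" where "tgt f = snd (snd f)"
definition mapof :: "('o, 'm) dmor \<Rightarrow> nat \<Rightarrow> nat" where "mapof f = fst (snd f)"

definition is_dmor :: "('o, 'm) cat \<Rightarrow> ('o, 'm) dmor \<Rightarrow> bool" where
  "is_dmor C f \<longleftrightarrow>
     is_simplex C (src f) \<and> is_simplex C (tgt f) \<and>
     opmap (mapof f) (dim (src f)) (dim (tgt f)) \<and>
     precomp (tgt f) (mapof f) (dim (src f)) = src f"

definition dcomp :: "('o, 'm) dmor \<Rightarrow> ('o, 'm) dmor \<Rightarrow> ('o, 'm) dmor" where
  "dcomp g f = (src f, (\<lambda>i. if i \<le> dim (src f) then mapof g (mapof f i) else undefined), tgt g)"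

definition did :: "('o, 'm) simplex \<Rightarrow> ('o, 'm) dmor" where
  "did X = (X, (\<lambda>i. if i \<le> dim X then i else undefined), X)"

inductive dsim :: "('o, 'm) cat \<Rightarrow> ('o, 'm) dmor \<Rightarrow> ('o, 'm) dmor \<Rightarrow> bool"
  for C :: "('o, 'm) cat" where
  elem: "\<lbrakk> is_simplex C X; dim X = q;
           opmap s (Suc q) q; s ` {0..Suc q} = {0..q};
           opmap d q (Suc q); opmap d' q (Suc q);
           \<forall>i\<le>q. s (d i) = i; \<forall>i\<le>q. s (d' i) = i \<rbrakk>
         \<Longrightarrow> dsim C (X, d, precomp X s (Suc q)) (X, d', precomp X s (Suc q))"
| refl: "is_dmor C f \<Longrightarrow> dsim C f f"
| sym: "dsim C f g \<Longrightarrow> dsim C g f"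
| trans: "dsim C f g \<Longrightarrow> dsim C g h \<Longrightarrow> dsim C f h"
| comp_left: "dsim C f g \<Longrightarrow> is_dmor C h \<Longrightarrow> src h = tgt f \<Longrightarrow> dsim C (dcomp h f) (dcomp h g)"
| comp_right: "dsim C f g \<Longrightarrow> is_dmor C h \<Longrightarrow> tgt h = src f \<Longrightarrow> dsim C (dcomp f h) (dcomp g h)"

definition quot_iso :: "('o, 'm) cat \<Rightarrow> ('o, 'm) dmor \<Rightarrow> bool" where
  "quot_iso C f \<longleftrightarrow>
     (\<exists>g. is_dmor C g \<and> src g = tgt f \<and> tgt g = src f \<and>
          dsim C (dcomp g f) (did (src f)) \<and> dsim C (dcomp f g) (did (tgt f)))"

end

theory Submission
  imports Defs
begin

lemma precomp_sel:
  "dim (precomp X b n) = n"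
  "sob (precomp X b n) i = (if i \<le> n then sob X (b i) else undefined)"
  "sar (precomp X b n) i j = (if i \<le> j \<and> j \<le> n then sar X (b i) (b j) else undefined)"
  by (auto simp: precomp_def)

lemma precomp_simplex:
  assumes X: "is_simplex C X" and b: "opmap b n (dim X)"
  shows "is_simplex C (precomp X b n)"
proof -
  have b1: "\<And>i. i \<le> n \<Longrightarrow> b i \<le> dim X" and b2: "\<And>i j. i \<le> j \<Longrightarrow> j \<le> n \<Longrightarrow> b i \<le> b j"
    using b unfolding opmap_def by auto
  note X' = X[unfolded is_simplex_def]
  show ?thesis unfolding is_simplex_def precomp_sel
  proof (intro conjI allI impI)
    fix i j k assume "i \<le> j \<and> j \<le> k \<and> k \<le> n"
    then show "(if i \<le> k \<and> k \<le> n then sar X (b i) (b k) else undefined) =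
       Comp C (if j \<le> k \<and> k \<le> n then sar X (b j) (b k) else undefined)
        (if i \<le> j \<and> j \<le> n then sar X (b i) (b j) else undefined)"
      using X' b1[of k] b2[of i j] b2[of j k] by auto
  qed (use X' b1 b2 in auto)
qed

lemma L1:
  assumes cat: "category C" and X: "is_simplex C X" and b: "opmap b n (dim X)"
    and x: "x \<le> n" and c: "Suc (b x) \<le> dim X"
    and mono: "x < n \<Longrightarrow> b x < b (Suc x)"
    and idm: "sar X (b x) (Suc (b x)) = Idm C (sob X (b x))"
  shows "dsim C (precomp X b n, b(x := Suc (b x)), X) (precomp X b n, b, X)"
proof -
  define V where "V = precomp X b n"
  define t where "t = (\<lambda>y. if y \<le> Suc n then (if y \<le> x then y else y - 1) else undefined)"
  define e where "e = (\<lambda>y. if y \<le> n then (if y < x then y else Suc y) else undefined)"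
  define e' where "e' = (\<lambda>y. if y \<le> n then (if y \<le> x then y else Suc y) else undefined)"
  define h where "h = (\<lambda>y. if y \<le> Suc n then (if y = Suc x then Suc (b x) else b (t y)) else undefined)"
  have b1: "\<And>i. i \<le> n \<Longrightarrow> b i \<le> dim X" and b2: "\<And>i j. i \<le> j \<Longrightarrow> j \<le> n \<Longrightarrow> b i \<le> b j"
    and b3: "\<And>i. n < i \<Longrightarrow> b i = undefined"
    using b unfolding opmap_def by auto
  note X' = X[unfolded is_simplex_def]
  note C' = cat[unfolded category_def]
  have V: "is_simplex C V" unfolding V_def by (rule precomp_simplex[OF X b])
  have dimV: "dim V = n" unfolding V_def precomp_sel ..
  have t: "opmap t (Suc n) n" unfolding opmap_def t_def using x by auto
  have timg: "t ` {0..Suc n} = {0..n}"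
  proof
    show "t ` {0..Suc n} \<subseteq> {0..n}" using t unfolding opmap_def by auto
    show "{0..n} \<subseteq> t ` {0..Suc n}"
    proof
      fix y assume "y \<in> {0..n}"
      then have "y \<le> n" by auto
      show "y \<in> t ` {0..Suc n}"
      proof (cases "y \<le> x")
        case True then show ?thesis using \<open>y \<le> n\<close> by (intro image_eqI[of _ _ y]) (auto simp: t_def)
      next
        case False then show ?thesis using \<open>y \<le> n\<close> by (intro image_eqI[of _ _ "Suc y"]) (auto simp: t_def)
      qed
    qed
  qed
  have e: "opmap e n (Suc n)" unfolding opmap_def e_def by auto
  have e': "opmap e' n (Suc n)" unfolding opmap_def e'_def by auto
  have te: "\<forall>i\<le>n. t (e i) = i" unfolding t_def e_def by auto
  have te': "\<forall>i\<le>n. t (e' i) = i" unfolding t_def e'_def by auto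
  have el: "dsim C (V, e, precomp V t (Suc n)) (V, e', precomp V t (Suc n))"
    by (rule dsim.elem[OF V dimV t timg e e' te te'])
  have hh: "\<And>y. y \<le> Suc n \<Longrightarrow> y \<noteq> Suc x \<Longrightarrow> h y = b (t y)" unfolding h_def by auto
  have hx: "h (Suc x) = Suc (b x)" unfolding h_def using x by auto
  have tx: "t (Suc x) = x" "t x = x" unfolding t_def using x by auto
  have tle: "\<And>y. y \<le> Suc n \<Longrightarrow> t y \<le> n" using t unfolding opmap_def by auto
  have tmono: "\<And>i j. i \<le> j \<Longrightarrow> j \<le> Suc n \<Longrightarrow> t i \<le> t j" using t unfolding opmap_def by auto
  have hmono: "\<And>i j. i \<le> j \<Longrightarrow> j \<le> Suc n \<Longrightarrow> h i \<le> h j"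
  proof -
    fix i j assume ij: "i \<le> j" "j \<le> Suc n"
    show "h i \<le> h j"
    proof (cases "i = Suc x")
      case True
      then have "j = Suc x \<or> (Suc x < j)" using ij by auto
      then show ?thesis
      proof
        assume "Suc x < j"
        then have "t j = j - 1" "x < n" "Suc x \<le> t j" "j \<noteq> Suc x" using ij unfolding t_def by auto
        then show ?thesis using True hx hh[of j] ij mono b2[of "Suc x" "t j"] tle[of j] by auto
      qed (use True in auto)
    next
      case False
      then show ?thesis
      proof (cases "j = Suc x")
        case True
        then have "t i \<le> x" using tmono[of i "Suc x"] tx ij by auto
        then show ?thesis using hh[of i] False True hx b2[of "t i" x] x ij by auto
      qed (use hh[of i] hh[of j] b2 tmono tle ij in auto)
    qed
  qed
  have hle: "\<And>y. y \<le> Suc n \<Longrightarrow> h y \<le> dim X"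
    using hh b1 tle c hx by (metis)
  have hmap: "opmap h (Suc n) (dim X)" unfolding opmap_def using hle hmono by (auto simp: h_def)
  have sobeq: "sob X (Suc (b x)) = sob X (b x)"
    using X' C' idm c by (metis le_SucE le_refl b1 x Suc_leD n_not_Suc_n)
  define cc where "cc = b x"
  have cdim: "cc \<le> dim X" "Suc cc \<le> dim X" using c unfolding cc_def by auto
  have idm': "sar X cc (Suc cc) = Idm C (sob X cc)" using idm unfolding cc_def .
  have sobeq': "sob X (Suc cc) = sob X cc" using sobeq unfolding cc_def .
  have ob: "\<And>i. i \<le> dim X \<Longrightarrow> sob X i \<in> Ob C" using X' by auto
  have ar: "\<And>i j. i \<le> j \<Longrightarrow> j \<le> dim X \<Longrightarrow> sar X i j \<in> Ar C \<and> Dom C (sar X i j) = sob X i \<and> Cod C (sar X i j) = sob X j"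
    using X' by auto
  have trn: "\<And>i j k. i \<le> j \<Longrightarrow> j \<le> k \<Longrightarrow> k \<le> dim X \<Longrightarrow> sar X i k = Comp C (sar X j k) (sar X i j)"
    using X' by auto
  have idd: "\<And>i. i \<le> dim X \<Longrightarrow> sar X i i = Idm C (sob X i)" using X' by auto
  have cid: "\<And>f. f \<in> Ar C \<Longrightarrow> Comp C f (Idm C (Dom C f)) = f \<and> Comp C (Idm C (Cod C f)) f = f"
    using C' by auto
  have ci1: "\<And>a. a \<le> cc \<Longrightarrow> sar X a (Suc cc) = sar X a cc"
  proof -
    fix a assume a: "a \<le> cc"
    have "sar X a (Suc cc) = Comp C (sar X cc (Suc cc)) (sar X a cc)" using trn[of a cc "Suc cc"] a cdim by auto
    also have "\<dots> = sar X a cc" using idm' cid[of "sar X a cc"] ar[of a cc] a cdim by auto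
    finally show "sar X a (Suc cc) = sar X a cc" .
  qed
  have ci2: "\<And>d. Suc cc \<le> d \<Longrightarrow> d \<le> dim X \<Longrightarrow> sar X (Suc cc) d = sar X cc d"
  proof -
    fix d assume d: "Suc cc \<le> d" "d \<le> dim X"
    have "sar X cc d = Comp C (sar X (Suc cc) d) (sar X cc (Suc cc))" using trn[of cc "Suc cc" d] d by auto
    also have "\<dots> = sar X (Suc cc) d" using idm' sobeq' cid[of "sar X (Suc cc) d"] ar[of "Suc cc" d] d by auto
    finally show "sar X (Suc cc) d = sar X cc d" ..
  qed
  have hx': "h (Suc x) = Suc cc" using hx unfolding cc_def .
  have btx: "b (t (Suc x)) = cc" using tx unfolding cc_def by simp
  have hgt: "\<And>y. Suc x < y \<Longrightarrow> y \<le> Suc n \<Longrightarrow> Suc cc \<le> h y"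
    using hmono hx' by (metis Suc_n_not_le_n less_imp_le_nat n_not_Suc_n le_antisym) 
  have pre: "precomp X h (Suc n) = precomp V t (Suc n)"
  proof -
    have s: "\<And>y. y \<le> Suc n \<Longrightarrow> sob X (h y) = sob X (b (t y))"
      using hh hx' btx sobeq' by (metis)
    have a: "\<And>y1 y2. y1 \<le> y2 \<Longrightarrow> y2 \<le> Suc n \<Longrightarrow> sar X (h y1) (h y2) = sar X (b (t y1)) (b (t y2))"
    proof -
      fix y1 y2 assume y: "y1 \<le> y2" "y2 \<le> Suc n"
      show "sar X (h y1) (h y2) = sar X (b (t y1)) (b (t y2))"
      proof (cases "y1 = Suc x")
        case True
        show ?thesis
        proof (cases "y2 = Suc x")
          case True
          then show ?thesis using \<open>y1 = Suc x\<close> hx' btx idd cdim sobeq' by auto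
        next
          case False
          then have "Suc x < y2" using True y by auto
          then have "Suc cc \<le> h y2" "h y2 \<le> dim X" using hgt y hle by auto
          then show ?thesis using ci2[of "h y2"] True hx' btx hh[of y2] False y by auto
        qed
      next
        case False
        show ?thesis
        proof (cases "y2 = Suc x")
          case True
          then have "h y1 \<le> cc" using hh[of y1] False y b2[of "t y1" x] tmono[of y1 "Suc x"] tx x
            unfolding cc_def by auto
          then show ?thesis using ci1[of "h y1"] True hx' btx hh[of y1] False y by auto
        next
          case False2: False
          then show ?thesis using hh[of y1] hh[of y2] False y by auto
        qed
      qed
    qed
    show ?thesis unfolding precomp_def V_def using s a tle tmono by (auto simp: fun_eq_iff)
  qed
  have H: "is_dmor C (precomp V t (Suc n), h, X)"
    unfolding is_dmor_def src_def tgt_def mapof_def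
    using precomp_simplex[OF V, of t "Suc n"] t dimV X hmap pre by (auto simp: precomp_sel)
  have cl: "dsim C (dcomp (precomp V t (Suc n), h, X) (V, e, precomp V t (Suc n)))
                   (dcomp (precomp V t (Suc n), h, X) (V, e', precomp V t (Suc n)))"
    by (rule dsim.comp_left[OF el H]) (simp add: src_def tgt_def)
  have d1: "dcomp (precomp V t (Suc n), h, X) (V, e, precomp V t (Suc n)) = (V, b(x := Suc (b x)), X)"
    unfolding dcomp_def src_def tgt_def mapof_def dimV
    using hh hx b3 x by (auto simp: fun_eq_iff e_def t_def dimV)
  have d2: "dcomp (precomp V t (Suc n), h, X) (V, e', precomp V t (Suc n)) = (V, b, X)"
    unfolding dcomp_def src_def tgt_def mapof_def dimV
    using hh hx b3 x by (auto simp: fun_eq_iff e'_def t_def dimV)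
  from cl have "dsim C (V, b(x := Suc (b x)), X) (V, b, X)" by (simp only: d1 d2)
  then show ?thesis unfolding V_def .
qed

lemma precomp_fix:
  assumes "opmap \<psi> p p" "\<forall>i\<le>p. \<xi> (\<psi> i) = \<xi> i"
  shows "precomp (precomp Y \<xi> p) \<psi> p = precomp Y \<xi> p"
  using assms unfolding precomp_def opmap_def by (auto simp: fun_eq_iff)

lemma L2:
  assumes cat: "category C" and Y: "is_simplex C Y" and xi: "opmap \<xi> p (dim Y)"
  shows "opmap \<phi> p p \<Longrightarrow> (\<forall>i\<le>p. \<phi> i \<le> i \<and> \<xi> (\<phi> i) = \<xi> i) \<Longrightarrow>
    dsim C (precomp Y \<xi> p, \<phi>, precomp Y \<xi> p) (precomp Y \<xi> p, \<lambda>i. if i \<le> p then i else undefined, precomp Y \<xi> p)"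
proof (induction \<phi> rule: measure_induct_rule[where f="\<lambda>\<phi>. \<Sum>i\<le>p. i - \<phi> i"])
  case (less \<phi>)
  define X where "X = precomp Y \<xi> p"
  have X: "is_simplex C X" unfolding X_def by (rule precomp_simplex[OF Y xi])
  have dimX: "dim X = p" unfolding X_def precomp_sel ..
  have xi1: "\<And>i. i \<le> p \<Longrightarrow> \<xi> i \<le> dim Y" and xi2: "\<And>i j. i \<le> j \<Longrightarrow> j \<le> p \<Longrightarrow> \<xi> i \<le> \<xi> j"
    using xi unfolding opmap_def by auto
  have ph1: "\<And>i. i \<le> p \<Longrightarrow> \<phi> i \<le> i" and ph2: "\<And>i. i \<le> p \<Longrightarrow> \<xi> (\<phi> i) = \<xi> i"
    using less.prems by auto
  have ph3: "\<And>i j. i \<le> j \<Longrightarrow> j \<le> p \<Longrightarrow> \<phi> i \<le> \<phi> j" and ph4: "\<And>i. p < i \<Longrightarrow> \<phi> i = undefined"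
    using less.prems unfolding opmap_def by auto
  have pX: "precomp X \<phi> p = X" unfolding X_def by (rule precomp_fix[OF less.prems(1)]) (use ph2 in auto)
  show ?case
  proof (cases "\<forall>i\<le>p. \<phi> i = i")
    case True
    then have "\<phi> = (\<lambda>i. if i \<le> p then i else undefined)" using ph4 by (auto simp: fun_eq_iff)
    moreover have "is_dmor C (X, \<lambda>i. if i \<le> p then i else undefined, X)"
      unfolding is_dmor_def src_def tgt_def mapof_def dimX using X pX calculation less.prems(1) dimX by simp
    ultimately show ?thesis using dsim.refl unfolding X_def by metis
  next
    case False
    define S where "S = {i. i \<le> p \<and> \<phi> i \<noteq> i}"
    define x where "x = Max S"
    have finS: "finite S" and neS: "S \<noteq> {}" unfolding S_def using False by auto
    have xS: "x \<in> S" unfolding x_def using finS neS by (rule Max_in)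
    have xmax: "\<And>i. i \<le> p \<Longrightarrow> x < i \<Longrightarrow> \<phi> i = i"
      using Max_ge[OF finS] unfolding x_def S_def by fastforce
    have xp: "x \<le> p" and phx: "\<phi> x < x" using xS ph1[of x] unfolding S_def by auto
    define \<phi>' where "\<phi>' = \<phi>(x := Suc (\<phi> x))"
    have xiS: "\<xi> (Suc (\<phi> x)) = \<xi> (\<phi> x)"
      using xi2[of "\<phi> x" "Suc (\<phi> x)"] xi2[of "Suc (\<phi> x)" x] ph2[of x] phx xp by auto
    have op': "opmap \<phi>' p p"
      unfolding opmap_def \<phi>'_def
    proof (intro conjI allI impI)
      fix i j assume ij: "i \<le> j \<and> j \<le> p"
      show "(\<phi>(x := Suc (\<phi> x))) i \<le> (\<phi>(x := Suc (\<phi> x))) j"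
      proof (cases "i = x")
        case True
        then show ?thesis using ij xmax[of j] phx by (cases "j = x") auto
      next
        case False
        then show ?thesis using ij ph3[of i j] ph3[of i x] by (cases "j = x") auto
      qed
    qed (use ph1 ph4 phx xp in \<open>auto intro: le_trans\<close>)
    have c': "\<forall>i\<le>p. \<phi>' i \<le> i \<and> \<xi> (\<phi>' i) = \<xi> i"
      unfolding \<phi>'_def using ph1 ph2 phx xiS by auto
    have lt: "(\<Sum>i\<le>p. i - \<phi>' i) < (\<Sum>i\<le>p. i - \<phi> i)"
      by (rule sum_strict_mono_ex1) (use phx xp in \<open>auto simp: \<phi>'_def\<close>)
    have IH: "dsim C (X, \<phi>', X) (X, \<lambda>i. if i \<le> p then i else undefined, X)"
      using less.IH[OF lt op' c'] unfolding X_def .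
    have idm: "sar X (\<phi> x) (Suc (\<phi> x)) = Idm C (sob X (\<phi> x))"
      unfolding X_def precomp_sel using xiS phx xp Y xi1[of "\<phi> x"] unfolding is_simplex_def by auto
    have op0: "opmap \<phi> p (dim X)" using less.prems(1) dimX by simp
    have step: "dsim C (precomp X \<phi> p, \<phi>', X) (precomp X \<phi> p, \<phi>, X)"
      unfolding \<phi>'_def
      by (rule L1[OF cat X op0 xp]) (use phx xp xmax idm dimX in auto)
    have "dsim C (X, \<phi>, X) (X, \<lambda>i. if i \<le> p then i else undefined, X)"
      using dsim.trans[OF dsim.sym[OF step[unfolded pX]] IH] .
    then show ?thesis unfolding X_def .
  qed
qed

lemma precomp_id:
  assumes "is_simplex C Y"
  shows "precomp Y (\<lambda>i. if i \<le> dim Y then i else undefined) (dim Y) = Y"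
proof -
  have "\<forall>i. dim Y < i \<longrightarrow> sob Y i = undefined" "\<forall>i j. \<not> (i \<le> j \<and> j \<le> dim Y) \<longrightarrow> sar Y i j = undefined"
    using assms unfolding is_simplex_def by blast+
  then show ?thesis unfolding precomp_def
    by (intro simplex.equality) (auto simp: fun_eq_iff not_le)
qed

theorem lemma17:
  fixes C :: "('o, 'm) cat" and X Y :: "('o, 'm) simplex" and \<xi> :: "nat \<Rightarrow> nat"
  assumes "category C"
    and "is_dmor C (X, \<xi>, Y)"
    and "\<xi> ` {0..dim X} = {0..dim Y}"
  shows "quot_iso C (X, \<xi>, Y)"
proof -
  note cat = assms(1)
  define p where "p = dim X"
  define q where "q = dim Y"
  have X: "is_simplex C X" and Y: "is_simplex C Y" and xi: "opmap \<xi> p q"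
    and Xeq: "precomp Y \<xi> p = X"
    using assms(2) unfolding is_dmor_def src_def tgt_def mapof_def p_def q_def by auto
  have surj: "\<xi> ` {0..p} = {0..q}" using assms(3) unfolding p_def q_def .
  have xi1: "\<And>i. i \<le> p \<Longrightarrow> \<xi> i \<le> q" and xi2: "\<And>i j. i \<le> j \<Longrightarrow> j \<le> p \<Longrightarrow> \<xi> i \<le> \<xi> j"
    and xi3: "\<And>i. p < i \<Longrightarrow> \<xi> i = undefined"
    using xi unfolding opmap_def by auto
  define g where "g = (\<lambda>j. if j \<le> q then (LEAST i. i \<le> p \<and> \<xi> i = j) else undefined)"
  have ex: "\<And>j. j \<le> q \<Longrightarrow> \<exists>i. i \<le> p \<and> \<xi> i = j" using surj by (force simp: image_iff set_eq_iff)
  have g1: "\<And>j. j \<le> q \<Longrightarrow> g j \<le> p \<and> \<xi> (g j) = j"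
  proof -
    fix j assume j: "j \<le> q"
    obtain i where i: "i \<le> p \<and> \<xi> i = j" using ex[OF j] by blast
    have "(LEAST i. i \<le> p \<and> \<xi> i = j) \<le> p \<and> \<xi> (LEAST i. i \<le> p \<and> \<xi> i = j) = j"
      by (rule LeastI[of "\<lambda>i. i \<le> p \<and> \<xi> i = j", OF i])
    then show "g j \<le> p \<and> \<xi> (g j) = j" unfolding g_def using j by simp
  qed
  have g2: "\<And>i. i \<le> p \<Longrightarrow> g (\<xi> i) \<le> i"
    unfolding g_def using xi1 by (auto intro: Least_le)
  have gmono: "\<And>i j. i \<le> j \<Longrightarrow> j \<le> q \<Longrightarrow> g i \<le> g j"
  proof (rule ccontr)
    fix i j assume ij: "i \<le> j" "j \<le> q" "\<not> g i \<le> g j"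
    then have "\<xi> (g j) \<le> \<xi> (g i)" using xi2[of "g j" "g i"] g1[of i] by auto
    then have "i = j" using g1[of i] g1[of j] ij by auto
    then show False using ij by auto
  qed
  have gop: "opmap g q p" unfolding opmap_def using g1 gmono by (auto simp: g_def)
  have preg: "precomp X g q = Y"
  proof -
    have "\<And>j. \<not> j \<le> q \<Longrightarrow> sob Y j = undefined" using Y unfolding is_simplex_def q_def by auto
    moreover have "\<And>i j. \<not> (i \<le> j \<and> j \<le> q) \<Longrightarrow> sar Y i j = undefined" using Y unfolding is_simplex_def q_def by auto
    ultimately show ?thesis unfolding Xeq[symmetric] precomp_def using g1 gmono
      by (auto simp: fun_eq_iff q_def intro: simplex.equality)
  qed
  define G where "G = (Y, g, X)"
  have G: "is_dmor C G" unfolding G_def is_dmor_def src_def tgt_def mapof_def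
    using X Y gop preg by (simp add: p_def q_def)
  define \<phi> where "\<phi> = (\<lambda>i. if i \<le> p then g (\<xi> i) else undefined)"
  have d1: "dcomp G (X, \<xi>, Y) = (X, \<phi>, X)"
    unfolding dcomp_def G_def \<phi>_def src_def tgt_def mapof_def p_def by (simp add: fun_eq_iff)
  have phop: "opmap \<phi> p p" unfolding opmap_def \<phi>_def using g1 xi1 gmono xi2 by auto
  have phc: "\<forall>i\<le>p. \<phi> i \<le> i \<and> \<xi> (\<phi> i) = \<xi> i" unfolding \<phi>_def using g1 g2 xi1 by auto
  have s1: "dsim C (dcomp G (X, \<xi>, Y)) (did (src (X, \<xi>, Y)))"
  proof -
    have "dsim C (X, \<phi>, X) (X, \<lambda>i. if i \<le> p then i else undefined, X)"
      using L2[OF cat Y xi[unfolded q_def] phop phc] unfolding Xeq .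
    then show ?thesis unfolding d1 did_def src_def p_def by simp
  qed
  have d2: "dcomp (X, \<xi>, Y) G = did Y"
    unfolding dcomp_def G_def did_def src_def tgt_def mapof_def using g1 by (auto simp: fun_eq_iff q_def)
  have idY: "is_dmor C (did Y)" unfolding is_dmor_def did_def src_def tgt_def mapof_def
    using Y precomp_id[OF Y] by (auto simp: opmap_def)
  have s2: "dsim C (dcomp (X, \<xi>, Y) G) (did (tgt (X, \<xi>, Y)))"
    unfolding d2 tgt_def using dsim.refl[OF idY] by simp
  show ?thesis unfolding quot_iso_def
    by (rule exI[of _ G]) (use G s1 s2 in \<open>auto simp: G_def src_def tgt_def\<close>)
qed

end
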